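(* Let $A\subseteq\mathbb Z_+^2$ be finite and $k\ge0$ an integer. Then $$|\pi_x(A_{>k})|+|\pi_y(A_{>k})|\le\Big(1+\frac1{k+1}\Big)|A_{>k}|.$$
   Context: $\mathbb Z_+=\{0,1,2,\dots\}$. $\mathrm{row}(x,A)$ (resp. $\mathrm{col}(x,A)$) is the number of points of $A$ on the horizontal (resp. vertical) line through $x$ (counting $x$ itself if $x\in A$). $A_{>k}=\{x\in A:\mathrm{row}(x,A)>k\text{ or }\mathrm{col}(x,A)>k\}$. $\pi_x,\pi_y$ denote projections onto the horizontal and vertical axes. *)

theory Defs
  imports Complex_Main
begin

text \<open>Points of Z_+^2 are pairs of naturals (first = horizontal coordinate x, second = vertical y).\<close>

definition row :: "nat \<times> nat \<Rightarrow> (nat \<times> nat) set \<Rightarrow> nat" where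
  "row p A = card {q \<in> A. snd q = snd p}"

definition col :: "nat \<times> nat \<Rightarrow> (nat \<times> nat) set \<Rightarrow> nat" where
  "col p A = card {q \<in> A. fst q = fst p}"

definition A_gt :: "(nat \<times> nat) set \<Rightarrow> nat \<Rightarrow> (nat \<times> nat) set" where
  "A_gt A k = {p \<in> A. row p A > k \<or> col p A > k}"

end

theory Submission
  imports Defs
begin

lemma recip_count:
  fixes h :: "'a \<Rightarrow> 'b"
  assumes "finite B"
  shows "real (card (h ` B)) = (\<Sum>p\<in>B. 1 / real (card {q\<in>B. h q = h p}))"
proof -
  have "(\<Sum>p\<in>B. 1 / real (card {q\<in>B. h q = h p}))
      = (\<Sum>y\<in>h ` B. \<Sum>p\<in>{x\<in>B. h x = y}. 1 / real (card {q\<in>B. h q = h p}))"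
    using sum.image_gen[OF assms] by blast
  also have "\<dots> = (\<Sum>y\<in>h ` B. 1)"
  proof (rule sum.cong[OF refl])
    fix y assume y: "y \<in> h ` B"
    have "(\<Sum>p\<in>{x\<in>B. h x = y}. 1 / real (card {q\<in>B. h q = h p}))
        = (\<Sum>p\<in>{x\<in>B. h x = y}. 1 / real (card {q\<in>B. h q = y}))"
      by (rule sum.cong) auto
    also have "\<dots> = 1"
    proof -
      have ne: "{q\<in>B. h q = y} \<noteq> {}" using y by auto
      have "finite {q\<in>B. h q = y}" using assms by simp
      hence "card {q\<in>B. h q = y} > 0" using ne by (simp add: card_gt_0_iff)
      thus ?thesis by simp
    qed
    finally show "(\<Sum>p\<in>{x\<in>B. h x = y}. 1 / real (card {q\<in>B. h q = h p})) = 1" .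
  qed
  finally show ?thesis by simp
qed

lemma point_bound:
  assumes fin: "finite A" and p: "p \<in> A_gt A k"
  shows "1 / real (card {q\<in>A_gt A k. fst q = fst p}) + 1 / real (card {q\<in>A_gt A k. snd q = snd p})
         \<le> 1 + 1 / (real k + 1)"
proof -
  let ?B = "A_gt A k"
  have finB: "finite ?B" using fin unfolding A_gt_def by simp
  have c1: "card {q\<in>?B. fst q = fst p} \<ge> 1"
  proof -
    have "p \<in> {q\<in>?B. fst q = fst p}" using p by simp
    moreover have "finite {q\<in>?B. fst q = fst p}" using finB by simp
    ultimately have "card {q\<in>?B. fst q = fst p} > 0" using card_gt_0_iff by blast
    thus ?thesis by simp
  qed
  have r1: "card {q\<in>?B. snd q = snd p} \<ge> 1"
  proof -
    have "p \<in> {q\<in>?B. snd q = snd p}" using p by simp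
    moreover have "finite {q\<in>?B. snd q = snd p}" using finB by simp
    ultimately have "card {q\<in>?B. snd q = snd p} > 0" using card_gt_0_iff by blast
    thus ?thesis by simp
  qed
  have pA: "p \<in> A" using p unfolding A_gt_def by simp
  have "row p A > k \<or> col p A > k" using p unfolding A_gt_def by simp
  then show ?thesis
  proof
    assume h: "row p A > k"
    have eq: "{q\<in>?B. snd q = snd p} = {q\<in>A. snd q = snd p}"
    proof -
      have "\<And>q. q \<in> A \<Longrightarrow> snd q = snd p \<Longrightarrow> row q A = row p A" unfolding row_def by simp
      thus ?thesis using h unfolding A_gt_def by auto
    qed
    have "card {q\<in>?B. snd q = snd p} \<ge> k + 1" using eq h unfolding row_def by simp
    hence a: "1 / real (card {q\<in>?B. snd q = snd p}) \<le> 1 / (real k + 1)"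
      by (intro divide_left_mono) auto
    have b: "1 / real (card {q\<in>?B. fst q = fst p}) \<le> 1" using c1 by simp
    show ?thesis using a b by linarith
  next
    assume h: "col p A > k"
    have eq: "{q\<in>?B. fst q = fst p} = {q\<in>A. fst q = fst p}"
    proof -
      have "\<And>q. q \<in> A \<Longrightarrow> fst q = fst p \<Longrightarrow> col q A = col p A" unfolding col_def by simp
      thus ?thesis using h unfolding A_gt_def by auto
    qed
    have "card {q\<in>?B. fst q = fst p} \<ge> k + 1" using eq h unfolding col_def by simp
    hence a: "1 / real (card {q\<in>?B. fst q = fst p}) \<le> 1 / (real k + 1)"
      by (intro divide_left_mono) auto
    have b: "1 / real (card {q\<in>?B. snd q = snd p}) \<le> 1" using r1 by simp
    show ?thesis using a b by linarith
  qed
qed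

theorem mainTheorem13:
  fixes A :: "(nat \<times> nat) set" and k :: nat
  assumes "finite A"
  shows "real (card (fst ` A_gt A k)) + real (card (snd ` A_gt A k))
           \<le> (1 + 1 / (real k + 1)) * real (card (A_gt A k))"
proof -
  let ?B = "A_gt A k"
  have finB: "finite ?B" using assms unfolding A_gt_def by simp
  have "real (card (fst ` ?B)) + real (card (snd ` ?B))
     = (\<Sum>p\<in>?B. 1 / real (card {q\<in>?B. fst q = fst p}) + 1 / real (card {q\<in>?B. snd q = snd p}))"
    using recip_count[OF finB, of fst] recip_count[OF finB, of snd] by (simp add: sum.distrib)
  also have "\<dots> \<le> (\<Sum>p\<in>?B. 1 + 1 / (real k + 1))"
    by (rule sum_mono) (rule point_bound[OF assms])
  also have "\<dots> = (1 + 1 / (real k + 1)) * real (card ?B)" by simp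
  finally show ?thesis .
qed

end
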